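(* There is an absolute constant $C>0$ such that the following holds. If $\zeta\le\min\{\frac12,\mathrm{ICR}\}$ and $(\gamma,\Delta)$ with $\gamma>0$, $\Delta\in[0,1)$ satisfy $\gamma<\frac{1+\Delta}{\zeta\sigma_{\max}^2}$ and $\frac{(1-\zeta)\gamma}{1-\Delta}\cdot\frac1n\operatorname{tr}(\boldsymbol A\boldsymbol A^T)<1$, then $\sqrt{\lambda_{2,\max}}\ge1-\frac{C\zeta}{\bar\kappa}$.
   Context: $\boldsymbol A\in\mathbb R^{n\times d}$; $\sigma_1^2\ge\dots\ge\sigma_n^2\ge0$ eigenvalues of $\boldsymbol A\boldsymbol A^T$, $\sigma_{\max}^2$ largest, $\sigma_{\min}^2$ smallest nonzero; $\bar\kappa=\frac{\frac1n\sum_j\sigma_j^2}{\sigma_{\min}^2}$, $\kappa=\sigma_{\max}^2/\sigma_{\min}^2$, $\mathrm{ICR}=\bar\kappa/\sqrt\kappa$. Batch fraction $\zeta\in(0,1]$. For $j\in[n]$: $\Omega_j=1-\gamma\zeta\sigma_j^2+\Delta$, $\lambda_{2,j}=\frac{-2\Delta+\Omega_j^2+\sqrt{\Omega_j^2(\Omega_j^2-4\Delta)}}{2}$ (complex root if the argument is negative); $\lambda_{2,\max}=\max\{|\lambda_{2,j}|:\sigma_j^2>0\}$. *)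

theory Defs
  imports Complex_Main "Jordan_Normal_Form.Char_Poly"
begin

definition mat_trace :: "real mat \<Rightarrow> real" where
  "mat_trace M = (\<Sum>i<dim_row M. M $$ (i, i))"

text \<open>The list s 0, ..., s (n-1) is the family of eigenvalues of A A^T counted
  with multiplicity (the roots of its characteristic polynomial).\<close>
definition eigvals_of :: "real mat \<Rightarrow> nat \<Rightarrow> (nat \<Rightarrow> real) \<Rightarrow> bool" where
  "eigvals_of M n s \<longleftrightarrow> char_poly M = (\<Prod>j<n. [:- s j, 1:])"

definition sig_max :: "nat \<Rightarrow> (nat \<Rightarrow> real) \<Rightarrow> real" where
  "sig_max n s = Max (s ` {..<n})"

definition sig_min :: "nat \<Rightarrow> (nat \<Rightarrow> real) \<Rightarrow> real" where
  "sig_min n s = Min {s j | j. j < n \<and> s j > 0}"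

definition kappa_bar :: "nat \<Rightarrow> (nat \<Rightarrow> real) \<Rightarrow> real" where
  "kappa_bar n s = ((\<Sum>j<n. s j) / real n) / sig_min n s"

definition kappa :: "nat \<Rightarrow> (nat \<Rightarrow> real) \<Rightarrow> real" where
  "kappa n s = sig_max n s / sig_min n s"

definition ICR :: "nat \<Rightarrow> (nat \<Rightarrow> real) \<Rightarrow> real" where
  "ICR n s = kappa_bar n s / sqrt (kappa n s)"

definition Omega :: "real \<Rightarrow> real \<Rightarrow> real \<Rightarrow> real \<Rightarrow> real" where
  "Omega \<gamma> \<zeta> \<Delta> sj = 1 - \<gamma> * \<zeta> * sj + \<Delta>"

text \<open>lambda_{2,j}; the square root is the complex principal root (csqrt),
  which is the real root if the argument is nonnegative.\<close>
definition lambda2 :: "real \<Rightarrow> real \<Rightarrow> real \<Rightarrow> real \<Rightarrow> complex" where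
  "lambda2 \<gamma> \<zeta> \<Delta> sj =
     (let \<Omega> = Omega \<gamma> \<zeta> \<Delta> sj in
      (complex_of_real (-2 * \<Delta> + \<Omega>\<^sup>2)
        + csqrt (complex_of_real (\<Omega>\<^sup>2 * (\<Omega>\<^sup>2 - 4 * \<Delta>)))) / 2)"

definition lambda2_max :: "nat \<Rightarrow> (nat \<Rightarrow> real) \<Rightarrow> real \<Rightarrow> real \<Rightarrow> real \<Rightarrow> real" where
  "lambda2_max n s \<gamma> \<zeta> \<Delta> = Max {cmod (lambda2 \<gamma> \<zeta> \<Delta> (s j)) | j. j < n \<and> s j > 0}"

end

theory Submission imports Defs begin

lemma coeff_lin_Suc:
  fixes p :: "'a::comm_ring_1 poly"
  shows "coeff (p * [:c, 1:]) (Suc k) = coeff p k + c * coeff p (Suc k)"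
  by (simp add: mult_pCons_right algebra_simps)

lemma coeff_lin_0:
  fixes p :: "'a::comm_ring_1 poly"
  shows "coeff (p * [:c, 1:]) 0 = c * coeff p 0"
  by (simp add: mult_pCons_right algebra_simps)

lemma prod_lin_coeff:
  fixes a :: "nat \<Rightarrow> 'a::comm_ring_1"
  shows "coeff (\<Prod>i<n. [:- a i, 1:]) n = 1 \<and> (\<forall>k>n. coeff (\<Prod>i<n. [:- a i, 1:]) k = 0) \<and>
    coeff (\<Prod>i<Suc n. [:- a i, 1:]) n = - (\<Sum>i<Suc n. a i)"
proof (induction n)
  case 0
  then show ?case by (simp add: coeff_lin_0)
next
  case (Suc n)
  let ?P = "\<Prod>i<n. [:- a i, 1:]"
  let ?Q = "\<Prod>i<Suc n. [:- a i, 1:]"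
  let ?R = "\<Prod>i<Suc (Suc n). [:- a i, 1:]"
  have Q: "?Q = ?P * [:- a n, 1:]" by simp
  have R: "?R = ?Q * [:- a (Suc n), 1:]" by simp
  have c1: "coeff ?Q (Suc n) = 1"
    using Suc.IH unfolding Q coeff_lin_Suc by simp
  have c2: "\<forall>k>Suc n. coeff ?Q k = 0"
  proof (intro allI impI)
    fix k assume "k > Suc n"
    then obtain k' where "k = Suc k'" "k' > n" by (cases k) auto
    then show "coeff ?Q k = 0" using Suc.IH unfolding Q coeff_lin_Suc by simp
  qed
  have c3: "coeff ?R (Suc n) = - (\<Sum>i<Suc (Suc n). a i)"
  proof -
    have "coeff ?R (Suc n) = coeff ?Q n + (- a (Suc n)) * coeff ?Q (Suc n)"
      unfolding R by (rule coeff_lin_Suc)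
    also have "\<dots> = - (\<Sum>i<Suc n. a i) - a (Suc n)"
    proof -
      have h3: "coeff ?Q n = - (\<Sum>i<Suc n. a i)" using Suc.IH by blast
      show ?thesis unfolding h3 c1 by simp
    qed
    finally show ?thesis by simp
  qed
  show ?case using c1 c2 c3 by blast
qed

lemma prod_lin_coeff_pred:
  fixes a :: "nat \<Rightarrow> 'a::comm_ring_1"
  assumes "n \<ge> 1"
  shows "coeff (\<Prod>i<n. [:- a i, 1:]) (n - 1) = - (\<Sum>i<n. a i)"
  using prod_lin_coeff[of a "n - 1"] assms by simp


lemma char_poly_matrix_entry:
  assumes A: "A \<in> carrier_mat n n" and i: "i < n" and j: "j < n"
  shows "char_poly_matrix A $$ (i, j) = (if i = j then [:- A $$ (i, i), 1:] else [:- A $$ (i, j):])"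
  using A i j unfolding char_poly_matrix_def by auto

lemma perm_nonid_degree:
  fixes A :: "'a::comm_ring_1 mat"
  assumes A: "A \<in> carrier_mat n n" and p: "p permutes {0..<n}" and pid: "p \<noteq> id"
  shows "degree (\<Prod>i = 0..<n. char_poly_matrix A $$ (i, p i)) < n - 1"
proof -
  let ?M = "char_poly_matrix A"
  from p pid obtain i where i: "i < n" and pi: "p i \<noteq> i"
    by (metis atLeastLessThan_iff order_refl permutes_natset_le)
  have pin: "p i < n" using p i by (simp add: permutes_in_image)
  have ppi: "p (p i) \<noteq> p i"
    using pi p by (metis permutes_inj injD)
  have deg: "degree (?M $$ (k, p k)) \<le> (if p k = k then 1 else 0)" if "k < n" for k
  proof -
    have pk: "p k < n" using p that by (simp add: permutes_in_image)
    show ?thesis using char_poly_matrix_entry[OF A that pk] by auto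
  qed
  have "degree (\<Prod>i = 0..<n. ?M $$ (i, p i)) \<le> (\<Sum>k = 0..<n. degree (?M $$ (k, p k)))"
    using degree_prod_sum_le[of "{0..<n}" "\<lambda>i. ?M $$ (i, p i)"] by (simp add: o_def)
  also have "\<dots> \<le> (\<Sum>k = 0..<n. (if p k = k then 1 else 0))"
    by (rule sum_mono) (use deg in auto)
  also have "\<dots> = card {k \<in> {0..<n}. p k = k}"
    by (simp add: sum.If_cases Int_def conj_commute)
  also have "\<dots> \<le> card ({0..<n} - {i, p i})"
    by (rule card_mono) (use pi ppi in auto)
  also have "\<dots> = n - 2" using i pin pi by (simp add: card_Diff_subset)
  finally show ?thesis using i pin pi by linarith
qed

lemma char_poly_coeff_trace:
  fixes A :: "'a::comm_ring_1 mat"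
  assumes A: "A \<in> carrier_mat n n" and n: "n \<ge> 1"
  shows "coeff (char_poly A) (n - 1) = - (\<Sum>i<n. A $$ (i, i))"
proof -
  let ?M = "char_poly_matrix A"
  let ?P = "{p. p permutes {0..<n}}"
  let ?t = "\<lambda>p. signof p * (\<Prod>i = 0..<n. ?M $$ (i, p i))"
  have MC: "?M \<in> carrier_mat n n" using A by simp
  have cp: "char_poly A = (\<Sum>p\<in>?P. ?t p)"
    unfolding char_poly_def by (rule det_def'[OF MC])
  have fin: "finite ?P" by (simp add: finite_permutations)
  have idP: "id \<in> ?P" by (simp add: permutes_id)
  have "coeff (char_poly A) (n - 1) = (\<Sum>p\<in>?P. coeff (?t p) (n - 1))"
    unfolding cp by (rule coeff_sum)
  also have "\<dots> = coeff (?t id) (n - 1) + (\<Sum>p\<in>?P - {id}. coeff (?t p) (n - 1))"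
    by (rule sum.remove[OF fin idP])
  also have "(\<Sum>p\<in>?P - {id}. coeff (?t p) (n - 1)) = 0"
  proof (rule sum.neutral, intro ballI)
    fix p assume "p \<in> ?P - {id}"
    then have p: "p permutes {0..<n}" and pid: "p \<noteq> id" by auto
    have "degree (?t p) \<le> degree (signof p :: 'a poly) + degree (\<Prod>i = 0..<n. ?M $$ (i, p i))"
      by (rule degree_mult_le)
    also have "degree (signof p :: 'a poly) = 0" by (simp add: degree_of_int)
    finally have "degree (?t p) < n - 1" using perm_nonid_degree[OF A p pid] by linarith
    then show "coeff (?t p) (n - 1) = 0" by (simp add: coeff_eq_0)
  qed
  also have "?t id = (\<Prod>i<n. [:- A $$ (i, i), 1:])"
  proof -
    have "(\<Prod>i = 0..<n. ?M $$ (i, id i)) = (\<Prod>i = 0..<n. [:- A $$ (i, i), 1:])"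
      by (rule prod.cong) (use char_poly_matrix_entry[OF A] in auto)
    then show ?thesis by (simp add: atLeast0LessThan)
  qed
  also have "coeff (\<Prod>i<n. [:- A $$ (i, i), 1:]) (n - 1) = - (\<Sum>i<n. A $$ (i, i))"
    by (rule prod_lin_coeff_pred[OF n])
  finally show ?thesis by simp
qed


lemma key_real:
  fixes D x e W :: real
  assumes D0: "0 \<le> D" and D1: "D < 1" and x0: "0 < x" and e0: "0 < e" and e5: "5 * e < 1"
    and xe: "x < 2 * (1 - D) * e" and W: "W = 1 + D - x"
  shows "1 - 5 * e \<le> sqrt (cmod ((complex_of_real (-2 * D + W\<^sup>2)
        + csqrt (complex_of_real (W\<^sup>2 * (W\<^sup>2 - 4 * D)))) / 2))"
proof -
  have "D * e \<ge> 0" using D0 e0 by simp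
  then have xlt: "x < 2 * e" using xe by (simp add: algebra_simps)
  have Wpos: "W > 0" using W xlt e5 D0 by linarith
  show ?thesis
  proof (cases "W\<^sup>2 \<ge> 4 * D")
    case True
    define r where "r = sqrt (W\<^sup>2 - 4 * D)"
    have r0: "r \<ge> 0" using True r_def by simp
    have rr: "r\<^sup>2 = W\<^sup>2 - 4 * D" using True r_def by simp
    have b: "sqrt (W\<^sup>2 * (W\<^sup>2 - 4 * D)) = W * r"
      using Wpos True by (simp add: r_def real_sqrt_mult)
    have lam: "(complex_of_real (-2 * D + W\<^sup>2)
        + csqrt (complex_of_real (W\<^sup>2 * (W\<^sup>2 - 4 * D)))) / 2 = complex_of_real (((W + r) / 2)\<^sup>2)"
    proof -
      have "csqrt (complex_of_real (W\<^sup>2 * (W\<^sup>2 - 4 * D))) = complex_of_real (W * r)"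
        using True b by (simp add: csqrt_of_real)
      moreover have "(-2 * D + W\<^sup>2 + W * r) / 2 = ((W + r) / 2)\<^sup>2"
        using rr by (simp add: power2_eq_square field_simps) 
      ultimately show ?thesis
        by (metis of_real_add of_real_divide of_real_numeral)
    qed
    have sq: "sqrt (cmod (complex_of_real (((W + r) / 2)\<^sup>2))) = (W + r) / 2"
      using Wpos r0 by (simp only: norm_of_real) simp
    have rlow: "r \<ge> (1 - D) - 8 * e"
    proof (cases "(1 - D) \<le> 8 * e")
      case True then show ?thesis using r0 by linarith
    next
      case False
      have f1: "W\<^sup>2 - 4 * D = (1 - D)\<^sup>2 - 2 * x * (1 + D) + x\<^sup>2" unfolding W by (simp add: power2_eq_square algebra_simps)
      have f2: "(1 - D)\<^sup>2 - 2 * x * (1 + D) + x\<^sup>2 \<ge> (1 - D)\<^sup>2 - 8 * (1 - D) * e"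
      proof -
        have "x * (1 + D) \<le> x * 2" using x0 D1 by (intro mult_left_mono) auto
        then have h2: "2 * x * (1 + D) \<le> 8 * (1 - D) * e" using xe by (simp add: algebra_simps)
        have "x\<^sup>2 \<ge> 0" by simp
        then show ?thesis using h2 by linarith
      qed
      have f3: "(1 - D)\<^sup>2 - 8 * (1 - D) * e \<ge> ((1 - D) - 8 * e)\<^sup>2"
      proof -
        have "8 * e * ((1 - D) - 8 * e) \<ge> 0" using False e0 by simp
        then show ?thesis by (simp add: power2_eq_square algebra_simps)
      qed
      have "((1 - D) - 8 * e)\<^sup>2 \<le> W\<^sup>2 - 4 * D" using f1 f2 f3 by linarith
      then show ?thesis unfolding r_def by (rule real_le_rsqrt)
    qed
    have "W + r \<ge> 2 - 10 * e" using rlow W xlt by linarith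
    then have "1 - 5 * e \<le> (W + r) / 2" by (simp add: field_simps)
    then show ?thesis using lam sq by simp
  next
    case False
    define t where "t = sqrt D"
    have t0: "t \<ge> 0" and tt: "t\<^sup>2 = D" using D0 t_def by auto
    have t1: "t < 1" using D1 t_def by simp
    have lam: "(complex_of_real (-2 * D + W\<^sup>2)
        + csqrt (complex_of_real (W\<^sup>2 * (W\<^sup>2 - 4 * D)))) / 2
        = Complex ((-2 * D + W\<^sup>2) / 2) (sqrt (W\<^sup>2 * (4 * D - W\<^sup>2)) / 2)"
    proof -
      have neg: "W\<^sup>2 * (W\<^sup>2 - 4 * D) \<le> 0" using False by (simp add: mult_nonneg_nonpos)
      have "csqrt (complex_of_real (W\<^sup>2 * (W\<^sup>2 - 4 * D))) = \<i> * sqrt (W\<^sup>2 * (4 * D - W\<^sup>2))"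
        using neg by (simp add: abs_if algebra_simps)
      then show ?thesis by (simp add: complex_eq_iff)
    qed
    have "cmod (Complex ((-2 * D + W\<^sup>2) / 2) (sqrt (W\<^sup>2 * (4 * D - W\<^sup>2)) / 2)) = D"
    proof -
      have pos: "W\<^sup>2 * (4 * D - W\<^sup>2) \<ge> 0" using False by simp
      have "cmod (Complex ((-2 * D + W\<^sup>2) / 2) (sqrt (W\<^sup>2 * (4 * D - W\<^sup>2)) / 2))
          = sqrt (((-2 * D + W\<^sup>2) / 2)\<^sup>2 + (sqrt (W\<^sup>2 * (4 * D - W\<^sup>2)) / 2)\<^sup>2)"
        by (simp add: cmod_def)
      also have "((-2 * D + W\<^sup>2) / 2)\<^sup>2 + (sqrt (W\<^sup>2 * (4 * D - W\<^sup>2)) / 2)\<^sup>2 = D\<^sup>2"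
        using pos by (simp add: power_divide power2_eq_square field_simps)
      finally show ?thesis using D0 by simp
    qed
    then have sq: "sqrt (cmod ((complex_of_real (-2 * D + W\<^sup>2)
        + csqrt (complex_of_real (W\<^sup>2 * (W\<^sup>2 - 4 * D)))) / 2)) = t"
      using lam t_def by simp
    have "W < 2 * t"
    proof -
      have "W\<^sup>2 < (2 * t)\<^sup>2" using False tt by (simp add: power_mult_distrib)
      then show ?thesis using t0 Wpos by (meson power_less_imp_less_base zero_le_mult_iff zero_le_numeral)
    qed
    then have "(1 - t)\<^sup>2 < x" using W tt by (simp add: power2_eq_square algebra_simps)
    also have "x < 2 * (1 - t) * (1 + t) * e"
    proof -
      have "(1 - t) * (1 + t) = 1 - D" using tt by (simp add: power2_eq_square algebra_simps)
      moreover have "2 * (1 - t) * (1 + t) * e = 2 * ((1 - t) * (1 + t)) * e" by (simp only: mult.assoc)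
      ultimately have "2 * (1 - t) * (1 + t) * e = 2 * (1 - D) * e" by (simp only:)
      then show ?thesis using xe by (simp only:)
    qed
    finally have "(1 - t) * (1 - t) < (1 - t) * (2 * (1 + t) * e)" by (simp add: power2_eq_square algebra_simps)
    then have "1 - t < 2 * (1 + t) * e" using t1 by simp
    moreover have "(1 + t) * e \<le> 2 * e" using t1 e0 by (intro mult_right_mono) auto
    ultimately have "1 - t < 4 * e" by linarith
    then show ?thesis using sq e0 by linarith
  qed
qed


theorem proposition6:
  "\<exists>C::real. C > 0 \<and>
    (\<forall>(A::real mat) n d (s::nat \<Rightarrow> real) (\<zeta>::real) (\<gamma>::real) (\<Delta>::real).
      A \<in> carrier_mat n d \<longrightarrow> n \<ge> 1 \<longrightarrow>
      eigvals_of (A * transpose_mat A) n s \<longrightarrow>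
      (\<exists>j<n. s j > 0) \<longrightarrow>
      0 < \<zeta> \<longrightarrow> \<zeta> \<le> 1 \<longrightarrow> \<zeta> \<le> min (1/2) (ICR n s) \<longrightarrow>
      \<gamma> > 0 \<longrightarrow> 0 \<le> \<Delta> \<longrightarrow> \<Delta> < 1 \<longrightarrow>
      \<gamma> < (1 + \<Delta>) / (\<zeta> * sig_max n s) \<longrightarrow>
      (1 - \<zeta>) * \<gamma> / (1 - \<Delta>) * (mat_trace (A * transpose_mat A) / real n) < 1 \<longrightarrow>
      sqrt (lambda2_max n s \<gamma> \<zeta> \<Delta>) \<ge> 1 - C * \<zeta> / kappa_bar n s)"
proof (rule exI[of _ 5], intro conjI allI impI)
  show "(5::real) > 0" by simp
  fix A :: "real mat" and n d and s :: "nat \<Rightarrow> real" and \<zeta> \<gamma> \<Delta> :: real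
  assume AC: "A \<in> carrier_mat n d" and n1: "n \<ge> 1"
    and eig: "eigvals_of (A * transpose_mat A) n s"
    and ex: "\<exists>j<n. s j > 0"
    and z0: "0 < \<zeta>" and z1: "\<zeta> \<le> 1" and zmin: "\<zeta> \<le> min (1/2) (ICR n s)"
    and g0: "\<gamma> > 0" and D0: "0 \<le> \<Delta>" and D1: "\<Delta> < 1"
    and gmax: "\<gamma> < (1 + \<Delta>) / (\<zeta> * sig_max n s)"
    and tr: "(1 - \<zeta>) * \<gamma> / (1 - \<Delta>) * (mat_trace (A * transpose_mat A) / real n) < 1"
  define M where "M = A * transpose_mat A"
  have MC: "M \<in> carrier_mat n n" using AC unfolding M_def by simp
  have T: "mat_trace M = (\<Sum>j<n. s j)"
  proof -
    have "coeff (char_poly M) (n - 1) = - (\<Sum>i<n. M $$ (i, i))"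
      by (rule char_poly_coeff_trace[OF MC n1])
    moreover have "coeff (char_poly M) (n - 1) = - (\<Sum>j<n. s j)"
      using eig prod_lin_coeff_pred[OF n1, of s] unfolding eigvals_of_def M_def by simp
    moreover have "mat_trace M = (\<Sum>i<n. M $$ (i, i))" using MC unfolding mat_trace_def by simp
    ultimately show ?thesis by simp
  qed
  define S where "S = {s j | j. j < n \<and> s j > 0}"
  have Sfin: "finite S"
  proof -
    have "S = s ` {j. j < n \<and> s j > 0}" unfolding S_def by auto
    then show ?thesis by simp
  qed
  have Sne: "S \<noteq> {}" using ex unfolding S_def by auto
  define m where "m = sig_min n s"
  have mS: "m \<in> S" unfolding m_def sig_min_def S_def[symmetric] using Sfin Sne by (rule Min_in)
  then obtain j0 where j0: "j0 < n" "s j0 = m" "m > 0" unfolding S_def by auto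
  have smax: "sig_max n s \<ge> m"
    unfolding sig_max_def using j0 by (intro Max_ge) auto
  have kap: "kappa n s \<ge> 1" unfolding kappa_def m_def[symmetric] using smax j0 by simp
  then have sk: "sqrt (kappa n s) \<ge> 1" by simp
  define kb where "kb = kappa_bar n s"
  have "\<zeta> \<le> kb / sqrt (kappa n s)" using zmin unfolding ICR_def kb_def by simp
  then have kb0: "kb > 0" using z0 sk by (smt (verit) divide_nonpos_pos)
  have Tn: "mat_trace M / real n = kb * m"
    using j0 unfolding kb_def kappa_bar_def m_def[symmetric] T by simp
  define e where "e = \<zeta> / kb"
  have e0: "e > 0" using z0 kb0 unfolding e_def by simp
  define L where "L = {cmod (lambda2 \<gamma> \<zeta> \<Delta> (s j)) | j. j < n \<and> s j > 0}"
  have Lfin: "finite L"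
  proof -
    have "L = (\<lambda>j. cmod (lambda2 \<gamma> \<zeta> \<Delta> (s j))) ` {j. j < n \<and> s j > 0}" unfolding L_def by auto
    then show ?thesis by simp
  qed
  have Lge: "lambda2_max n s \<gamma> \<zeta> \<Delta> \<ge> cmod (lambda2 \<gamma> \<zeta> \<Delta> m)"
    unfolding lambda2_max_def L_def[symmetric] using Lfin
    by (rule Max_ge) (use j0 in \<open>auto simp: L_def\<close>)
  have "1 - 5 * e \<le> sqrt (lambda2_max n s \<gamma> \<zeta> \<Delta>)"
  proof (cases "5 * e < 1")
    case False
    have "0 \<le> sqrt (lambda2_max n s \<gamma> \<zeta> \<Delta>)" using Lge by (smt (verit) norm_ge_zero real_sqrt_ge_zero)
    then show ?thesis using False by linarith
  next
    case True
    define x where "x = \<gamma> * \<zeta> * m"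
    have x0: "x > 0" using g0 z0 j0 unfolding x_def by simp
    have a: "(1 - \<zeta>) * \<gamma> * (kb * m) < 1 - \<Delta>"
      using tr D1 unfolding M_def[symmetric] Tn by (simp add: field_simps)
    have b: "\<gamma> * (kb * m) \<le> 2 * ((1 - \<zeta>) * \<gamma> * (kb * m))"
    proof -
      have "\<gamma> * (kb * m) \<ge> 0" using g0 kb0 j0 by simp
      moreover have "1 - \<zeta> \<ge> 1/2" using zmin by simp
      ultimately have "(2 * (1 - \<zeta>)) * (\<gamma> * (kb * m)) \<ge> 1 * (\<gamma> * (kb * m))"
        by (intro mult_right_mono) auto
      then show ?thesis by (simp only: mult.assoc mult_1)
    qed
    have a2: "2 * ((1 - \<zeta>) * \<gamma> * (kb * m)) < 2 * (1 - \<Delta>)" using a by simp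
    have c: "\<gamma> * (kb * m) < 2 * (1 - \<Delta>)" using order_le_less_trans[OF b a2] .
    have xe: "x = \<gamma> * (kb * m) * e" unfolding x_def e_def using kb0 by (simp add: field_simps)
    have "x < 2 * (1 - \<Delta>) * e" unfolding xe using c e0 by (simp add: mult_strict_right_mono)
    then have "1 - 5 * e \<le> sqrt (cmod (lambda2 \<gamma> \<zeta> \<Delta> m))"
      unfolding lambda2_def Let_def
      by (intro key_real[OF D0 D1 x0 e0 True]) (simp_all add: Omega_def x_def)
    also have "\<dots> \<le> sqrt (lambda2_max n s \<gamma> \<zeta> \<Delta>)" using Lge by simp
    finally show ?thesis .
  qed
  then show "sqrt (lambda2_max n s \<gamma> \<zeta> \<Delta>) \<ge> 1 - 5 * \<zeta> / kappa_bar n s"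
    unfolding e_def kb_def by simp
qed

end
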